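(* Let $p\ge1$. There is a constant $C>0$ depending only on $p$ such that for every $\mu$-complex $X\in\mathbb{R}^{n\times d}$ and every $\beta\in\mathbb{R}^d$, $$f(X\beta)\ge C\,\frac{n}{\mu}\,(1+\ln\mu),$$ i.e. $f(X\beta)=\Omega\!\left(\frac{n}{\mu}(1+\ln\mu)\right)$.
   Context: $\Phi_p(x)=\frac{p^{1-1/p}}{2\Gamma(1/p)}\int_{-\infty}^x \exp(-|t|^p/p)\,dt$, $g(r)=-\ln(\Phi_p(-r))$, and for $X$ with rows $x_i$, $f(X\beta)=\sum_{i=1}^n g(x_i\beta)$. $\mu_p(X)=\sup_{\beta\in\mathbb{R}^d\setminus\{0\}}\frac{\sum_{x_i\beta>0}|x_i\beta|^p}{\sum_{x_i\beta<0}|x_i\beta|^p}$, and $X$ is $\mu$-complex if $\mu_p(X)\le\mu<\infty$. *)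

theory Defs
  imports "HOL-Analysis.Analysis"
begin

text \<open>Data matrix X with n rows and d columns is represented as X :: nat => nat => real,
  entry (i,j) = X i j for i < n, j < d; beta :: nat => real uses coordinates j < d.\<close>

definition rowdot :: "(nat \<Rightarrow> nat \<Rightarrow> real) \<Rightarrow> nat \<Rightarrow> (nat \<Rightarrow> real) \<Rightarrow> nat \<Rightarrow> real" where
  "rowdot X d \<beta> i = (\<Sum>j<d. X i j * \<beta> j)"

definition Phi_p :: "real \<Rightarrow> real \<Rightarrow> real" where
  "Phi_p p x = p powr (1 - 1/p) / (2 * Gamma (1/p)) *
      (LBINT t:{..x}. exp (- (\<bar>t\<bar> powr p) / p))"

definition g_p :: "real \<Rightarrow> real \<Rightarrow> real" where
  "g_p p r = - ln (Phi_p p (- r))"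

definition f_p :: "real \<Rightarrow> (nat \<Rightarrow> nat \<Rightarrow> real) \<Rightarrow> nat \<Rightarrow> nat \<Rightarrow> (nat \<Rightarrow> real) \<Rightarrow> real" where
  "f_p p X n d \<beta> = (\<Sum>i<n. g_p p (rowdot X d \<beta> i))"

definition mu_ratio :: "real \<Rightarrow> (nat \<Rightarrow> nat \<Rightarrow> real) \<Rightarrow> nat \<Rightarrow> nat \<Rightarrow> (nat \<Rightarrow> real) \<Rightarrow> ereal" where
  "mu_ratio p X n d \<beta> =
    (let num = (\<Sum>i\<in>{i. i < n \<and> rowdot X d \<beta> i > 0}. \<bar>rowdot X d \<beta> i\<bar> powr p);
         den = (\<Sum>i\<in>{i. i < n \<and> rowdot X d \<beta> i < 0}. \<bar>rowdot X d \<beta> i\<bar> powr p)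
     in if den = 0 then \<infinity> else ereal (num / den))"

definition mu_p :: "real \<Rightarrow> (nat \<Rightarrow> nat \<Rightarrow> real) \<Rightarrow> nat \<Rightarrow> nat \<Rightarrow> ereal" where
  "mu_p p X n d = (SUP \<beta>\<in>{\<beta>. \<exists>j<d. \<beta> j \<noteq> 0}. mu_ratio p X n d \<beta>)"

definition mu_complex :: "real \<Rightarrow> (nat \<Rightarrow> nat \<Rightarrow> real) \<Rightarrow> nat \<Rightarrow> nat \<Rightarrow> real \<Rightarrow> bool" where
  "mu_complex p X n d \<mu> \<longleftrightarrow> mu_p p X n d \<le> ereal \<mu>"

end

theory Submission
  imports Defs
begin


lemma gamma_set:
  fixes s :: real assumes s: "s > 0"
  shows "set_integrable lborel {0<..} (\<lambda>t. t powr (s - 1) / exp t)"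
        "(LBINT t:{0<..}. t powr (s - 1) / exp t) = Gamma s"
proof -
  have eq: "(\<lambda>t. indicator {0<..} t *\<^sub>R (t powr (s - 1) / exp t)) = (\<lambda>t. indicator {0..} t * t powr (s - 1) / exp t)"
    by (rule ext) (auto simp: indicator_def)
  have hb: "has_bochner_integral lborel (\<lambda>t. indicator {0..} t * t powr (s - 1) / exp t) (Gamma s)"
    apply (rule has_bochner_integral_nn_integral)
    using s by (auto simp: Gamma_conv_nn_integral_real[OF s] Gamma_real_pos less_imp_le)
  show "set_integrable lborel {0<..} (\<lambda>t. t powr (s - 1) / exp t)"
    unfolding set_integrable_def eq using hb by (simp add: has_bochner_integral_iff)
  show "(LBINT t:{0<..}. t powr (s - 1) / exp t) = Gamma s"
    unfolding set_lebesgue_integral_def eq using hb by (simp add: has_bochner_integral_iff)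
qed




lemma half_int:
  fixes p q :: real assumes p: "p \<ge> 1" and q: "q > 0"
  shows "set_integrable lborel {0<..} (\<lambda>x. exp (- (\<bar>x\<bar> powr p) * q))"
        "(LBINT x:{0<..}. exp (- (\<bar>x\<bar> powr p) * q)) = q powr (-1/p) / p * Gamma (1/p)"
proof -
  define f where "f = (\<lambda>x::real. exp (- (\<bar>x\<bar> powr p) * q))"
  define g where "g = (\<lambda>t::real. (t/q) powr (1/p))"
  define g' where "g' = (\<lambda>t::real. (t/q) powr (1/p - 1) / (p*q))"
  define c where "c = q powr (-1/p) / p"
  have p0: "p > 0" using p by simp
  have fg: "f (g t) * g' t = c * (t powr (1/p - 1) / exp t)" if t: "t > 0" for t
  proof -
    have "\<bar>(t/q) powr (1/p)\<bar> powr p = t/q" using t q p0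
      by (simp add: powr_powr)
    hence 1: "f (g t) = exp (- t)" using q by (simp add: f_def g_def)
    have qa: "q powr (1/p - 1) * q = q powr (1/p)"
      using q powr_add[of q "1/p - 1" 1] by simp
    have "(t/q) powr (1/p - 1) / (p*q) = t powr (1/p - 1) / (p * (q powr (1/p - 1) * q))"
      using t q by (simp add: powr_divide field_simps)
    also have "\<dots> = t powr (1/p - 1) * q powr (-1/p) / p"
      unfolding qa using q p0 by (simp add: powr_minus field_simps)
    finally have "g' t = t powr (1/p - 1) * q powr (-1/p) / p" by (simp add: g'_def)
    then show ?thesis unfolding 1 c_def by (simp add: exp_minus field_simps)
  qed
  have GI: "set_integrable lborel {0<..} (\<lambda>t. c * (t powr (1/p - 1) / exp t))"
    using set_integrable_mult_right[OF gamma_set(1)[of "1/p"], of c] p0 by simp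
  have int_fg: "set_integrable lborel (einterval 0 \<infinity>) (\<lambda>x. f (g x) * g' x)"
    using GI by (subst set_integrable_cong[where f' = "\<lambda>t. c * (t powr (1/p - 1) / exp t)"]) (auto simp: fg zero_ereal_def)
    have h1: "DERIV g x :> g' x" if "0 < ereal x" "ereal x < \<infinity>" for x
      using that q p0 unfolding g_def g'_def
      by (auto intro!: derivative_eq_intros simp: field_simps powr_diff)
    have h2: "isCont f (g x)" if "0 < ereal x" "ereal x < \<infinity>" for x
    proof -
      have "g x > 0" using that q by (simp add: g_def)
      then show ?thesis unfolding f_def by (auto intro!: continuous_intros)
    qed
    have h3: "isCont g' x" if "0 < ereal x" "ereal x < \<infinity>" for x
      using that q p0 unfolding g'_def by (auto intro!: continuous_intros)
    have h4: "0 \<le> f (g x)" for x by (simp add: f_def)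
    have h5: "0 \<le> g' x" for x using q p0 by (simp add: g'_def)
    have "(g \<longlongrightarrow> 0) (at_right 0)"
      unfolding g_def using p0 q
      by (intro tendsto_zero_powrI[where b="1/p"]) (auto intro!: tendsto_eq_intros eventually_at_rightI[of 0 1])
    then have h6: "((ereal \<circ> g \<circ> real_of_ereal) \<longlongrightarrow> 0) (at_right 0)"
      by (simp add: zero_ereal_def ereal_tendsto_simps)
    have "filterlim g at_top at_top"
    proof (subst filterlim_at_top, intro allI)
      fix Z :: real
      have "eventually (\<lambda>t. q * (max Z 1) powr p \<le> t) at_top" by (rule eventually_ge_at_top)
      then show "eventually (\<lambda>t. Z \<le> g t) at_top"
      proof (rule eventually_mono)
        fix t assume t: "q * (max Z 1) powr p \<le> t"
        hence "(max Z 1) powr p \<le> t / q" using q by (simp add: field_simps)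
        hence "((max Z 1) powr p) powr (1/p) \<le> (t/q) powr (1/p)"
          using p0 by (intro powr_mono2) auto
        also have "((max Z 1) powr p) powr (1/p) = max Z 1" using p0 by (simp add: powr_powr)
        finally show "Z \<le> g t" by (simp add: g_def)
      qed
    qed
    then have h7: "((ereal \<circ> g \<circ> real_of_ereal) \<longlongrightarrow> \<infinity>) (at_left \<infinity>)"
      by (simp add: ereal_tendsto_simps)
  note sub = interval_integral_substitution_nonneg[of 0 \<infinity> g g' f 0 \<infinity>, OF _ h1 h2 h3 h4 h5 h6 h7 int_fg]
  show "set_integrable lborel {0<..} (\<lambda>x. exp (- (\<bar>x\<bar> powr p) * q))"
    using sub(1) by (simp add: zero_ereal_def f_def)
  have "(LBINT x:{0<..}. f x) = (LBINT x=0..\<infinity>. f x)"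
    using interval_integral_to_infinity_eq[where a=0 and M=lborel and f=f] by (simp add: zero_ereal_def)
  also have "\<dots> = (LBINT x=0..\<infinity>. f (g x) * g' x)" by (rule sub(2)) simp
  also have "\<dots> = (LBINT x:{0<..}. f (g x) * g' x)"
    using interval_integral_to_infinity_eq[where a=0 and M=lborel and f="\<lambda>x. f (g x) * g' x"] by (simp add: zero_ereal_def)
  also have "\<dots> = (LBINT x:{0<..}. c * (x powr (1/p - 1) / exp x))"
    by (rule set_lebesgue_integral_cong) (auto simp: fg)
  also have "\<dots> = c * Gamma (1/p)" using gamma_set(2)[of "1/p"] p0 set_integral_mult_right[where a=c and M=lborel and A="{0<..}" and f="\<lambda>x. x powr (1/p - 1) / exp x"] by (simp del: set_integral_mult_right)
  finally show "(LBINT x:{0<..}. exp (- (\<bar>x\<bar> powr p) * q)) = q powr (-1/p) / p * Gamma (1/p)"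
    by (simp add: f_def c_def)
qed



lemma full_int:
  fixes p q :: real assumes p: "p \<ge> 1" and q: "q > 0"
  shows "integrable lborel (\<lambda>x. exp (- (\<bar>x\<bar> powr p) * q))"
        "integral\<^sup>L lborel (\<lambda>x. exp (- (\<bar>x\<bar> powr p) * q)) = 2 * (q powr (-1/p) / p * Gamma (1/p))"
proof -
  define h where "h = (\<lambda>x::real. exp (- (\<bar>x\<bar> powr p) * q))"
  define v where "v = q powr (-1/p) / p * Gamma (1/p)"
  have hp: "integrable lborel (\<lambda>x. indicator {0<..} x * h x)"
    using half_int(1)[OF p q] by (simp add: set_integrable_def h_def)
  have hpv: "integral\<^sup>L lborel (\<lambda>x. indicator {0<..} x * h x) = v"
    using half_int(2)[OF p q] by (simp add: set_lebesgue_integral_def h_def v_def)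
  have refl: "(\<lambda>x. indicator {..<0} (- x) * h (- x)) = (\<lambda>x. indicator {0<..} x * h x)"
    by (rule ext) (auto simp: h_def indicator_def)
  have hn: "integrable lborel (\<lambda>x. indicator {..<0} x * h x)"
    using lborel_integrable_real_affine_iff[of "-1" "\<lambda>x. indicator {..<0} x * h x" 0] hp refl by simp
  have hnv: "integral\<^sup>L lborel (\<lambda>x. indicator {..<0} x * h x) = v"
    using lborel_integral_real_affine[of "-1" "\<lambda>x. indicator {..<0} x * h x" 0] hpv refl by simp
  have ae: "AE x in lborel. indicator {..<0} x * h x + indicator {0<..} x * h x = h x"
    using AE_lborel_singleton[of 0] by eventually_elim (auto simp: indicator_def)
  have "integrable lborel (\<lambda>x. indicator {..<0} x * h x + indicator {0<..} x * h x)"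
    using hn hp by simp
  then show i: "integrable lborel (\<lambda>x. exp (- (\<bar>x\<bar> powr p) * q))"
    unfolding h_def[symmetric] by (rule integrable_cong_AE_imp) (use ae in \<open>auto simp: h_def\<close>)
  have "integral\<^sup>L lborel h = integral\<^sup>L lborel (\<lambda>x. indicator {..<0} x * h x + indicator {0<..} x * h x)"
    using ae by (intro integral_cong_AE) (auto simp: h_def)
  also have "\<dots> = 2 * v" using hn hp hnv hpv by simp
  finally show "integral\<^sup>L lborel (\<lambda>x. exp (- (\<bar>x\<bar> powr p) * q)) = 2 * (q powr (-1/p) / p * Gamma (1/p))"
    by (simp add: h_def v_def)
qed

definition ee :: "real \<Rightarrow> real \<Rightarrow> real" where "ee p t = exp (- (\<bar>t\<bar> powr p) / p)"
definition II :: "real \<Rightarrow> real \<Rightarrow> real" where "II p x = (LBINT t:{..x}. ee p t)"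
definition ZZ :: "real \<Rightarrow> real" where "ZZ p = integral\<^sup>L lborel (ee p)"

lemma ee_alt: "p > 0 \<Longrightarrow> ee p = (\<lambda>x. exp (- (\<bar>x\<bar> powr p) * (1/p)))"
  by (rule ext) (simp add: ee_def)

lemma ee_int: "p \<ge> 1 \<Longrightarrow> integrable lborel (ee p)"
  using full_int(1)[of p "1/p"] ee_alt[of p] by simp

lemma ee_pos: "ee p t > 0" by (simp add: ee_def)

lemma ee_meas[measurable]: "ee p \<in> borel_measurable borel"
  unfolding ee_def by measurable

lemma ZZ_val: "p \<ge> 1 \<Longrightarrow> ZZ p = 2 * (p powr (1/p) / p * Gamma (1/p))"
  using full_int(2)[of p "1/p"] ee_alt[of p] by (simp add: ZZ_def powr_minus_divide powr_divide)

lemma Phi_eq: assumes "p \<ge> 1" shows "Phi_p p x = II p x / ZZ p"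
proof -
  have e: "p powr (1 - 1/p) = p / p powr (1/p)" using assms by (simp add: powr_diff)
  have G: "Gamma (1/p) > 0" using assms by (simp add: Gamma_real_pos)
  have P: "p powr (1/p) > 0" using assms by simp
  have A: "(LBINT t:{..x}. exp (- (\<bar>t\<bar> powr p) / p)) = II p x" by (simp add: II_def ee_def)
  show ?thesis unfolding Phi_p_def A e ZZ_val[OF assms] using G P assms
    by (simp add: field_simps)
qed

lemma ee_set_int: "p \<ge> 1 \<Longrightarrow> A \<in> sets borel \<Longrightarrow> set_integrable lborel A (ee p)"
  unfolding set_integrable_def by (rule integrable_mult_indicator) (auto simp: ee_int)




lemma sint_nonneg: "(LBINT t:A. ee p t) \<ge> 0"
  unfolding set_lebesgue_integral_def by (rule integral_nonneg_AE) (auto simp: ee_def indicator_def)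

lemma ee_mono: assumes "p \<ge> 1" "\<bar>t\<bar> \<le> \<bar>u\<bar>" shows "ee p u \<le> ee p t"
proof -
  have "\<bar>t\<bar> powr p \<le> \<bar>u\<bar> powr p" using assms by (intro powr_mono2) auto
  then show ?thesis using assms unfolding ee_def by (simp add: divide_right_mono)
qed

lemma II_split: assumes p: "p \<ge> 1" and xy: "x \<le> y"
  shows "II p y = II p x + (LBINT t:{x<..y}. ee p t)"
proof -
  have e: "{..y} = {..x} \<union> {x<..y}" using xy by auto
  have "II p y = (LBINT t:({..x} \<union> {x<..y}). ee p t)" unfolding II_def e ..
  also have "\<dots> = II p x + (LBINT t:{x<..y}. ee p t)" unfolding II_def
    by (rule set_integral_Un) (auto intro: ee_set_int[OF p])
  finally show ?thesis .
qed

lemma ZZ_split: assumes p: "p \<ge> 1"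
  shows "ZZ p = II p x + (LBINT t:{x<..}. ee p t)"
proof -
  have e: "{..x} \<union> {x<..} = UNIV" by auto
  have "ZZ p = (LBINT t:({..x} \<union> {x<..}). ee p t)"
    unfolding e by (simp add: ZZ_def set_lebesgue_integral_def)
  also have "\<dots> = II p x + (LBINT t:{x<..}. ee p t)" unfolding II_def
    by (rule set_integral_Un) (auto intro: ee_set_int[OF p])
  finally show ?thesis .
qed

lemma int_lower: assumes p: "p \<ge> 1" and xy: "x \<le> y" and m: "\<And>t. t \<in> {x<..y} \<Longrightarrow> m \<le> ee p t"
  shows "(y - x) * m \<le> (LBINT t:{x<..y}. ee p t)"
proof -
  have ci: "set_integrable lborel {x<..y} (\<lambda>t. m)"
  proof -
    have "integrable lborel (indicat_real {x<..y})"
      using xy by (intro integrable_real_indicator) auto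
    then show ?thesis unfolding set_integrable_def by simp
  qed
  have "(LBINT t:{x<..y}. m) \<le> (LBINT t:{x<..y}. ee p t)"
    by (rule set_integral_mono) (auto simp: ee_set_int[OF p] m ci)
  moreover have "(LBINT t:{x<..y}. m) = (y - x) * m"
    using xy by (subst set_integral_const) auto
  ultimately show ?thesis by simp
qed

lemma II_pos: assumes p: "p \<ge> 1" shows "II p x > 0"
proof -
  have "t \<in> {x-1<..x} \<Longrightarrow> ee p (\<bar>x\<bar> + 1) \<le> ee p t" for t by (rule ee_mono[OF p]) auto
  then have "1 * ee p (\<bar>x\<bar> + 1) \<le> (LBINT t:{x-1<..x}. ee p t)"
    using int_lower[OF p, of "x - 1" x "ee p (\<bar>x\<bar> + 1)"] by auto
  then have "0 < (LBINT t:{x-1<..x}. ee p t)" using ee_pos[of p "\<bar>x\<bar> + 1"] by linarith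
  then show ?thesis using II_split[OF p, of "x - 1" x] by (auto simp: II_def sint_nonneg add_nonneg_pos)
qed

lemma II_mono: assumes p: "p \<ge> 1" and xy: "x \<le> y" shows "II p x \<le> II p y"
  using II_split[OF p xy] sint_nonneg by auto

lemma II_le_ZZ: assumes p: "p \<ge> 1" shows "II p x \<le> ZZ p"
  using ZZ_split[OF p, of x] sint_nonneg by auto

lemma II_lt_ZZ: assumes p: "p \<ge> 1" shows "II p x < ZZ p"
proof -
  have "t \<in> {x<..x+1} \<Longrightarrow> ee p (\<bar>x\<bar> + 2) \<le> ee p t" for t by (rule ee_mono[OF p]) auto
  then have "1 * ee p (\<bar>x\<bar> + 2) \<le> (LBINT t:{x<..x+1}. ee p t)"
    using int_lower[OF p, of x "x + 1" "ee p (\<bar>x\<bar> + 2)"] by auto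
  then have "II p x < II p (x + 1)" using II_split[OF p, of x "x+1"] ee_pos[of p "\<bar>x\<bar> + 2"]
    by linarith
  then show ?thesis using II_le_ZZ[OF p, of "x+1"] by simp
qed

lemma ZZ_pos: "p \<ge> 1 \<Longrightarrow> ZZ p > 0"
  using II_pos II_le_ZZ by (meson less_le_trans)

lemma g_eq: "p \<ge> 1 \<Longrightarrow> g_p p r = - ln (II p (- r) / ZZ p)"
  by (simp add: g_p_def Phi_eq)

lemma g_nonneg: assumes p: "p \<ge> 1" shows "g_p p r \<ge> 0"
proof -
  have "II p (-r) / ZZ p \<le> 1" using II_le_ZZ[OF p] ZZ_pos[OF p] by simp
  moreover have "II p (-r) / ZZ p > 0" using II_pos[OF p] ZZ_pos[OF p] by simp
  ultimately show ?thesis by (simp add: g_eq[OF p])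
qed

lemma g_ge: assumes p: "p \<ge> 1" and Y: "II p (-r) \<le> Y" shows "g_p p r \<ge> - ln (Y / ZZ p)"
proof -
  have "ln (II p (-r) / ZZ p) \<le> ln (Y / ZZ p)"
    using II_pos[OF p, of "-r"] ZZ_pos[OF p] Y by (intro ln_mono) (auto intro: divide_right_mono)
  then show ?thesis by (simp add: g_eq[OF p])
qed




lemma tail_bound:
  assumes p: "p \<ge> 1" and a: "a > 0" and r: "r \<ge> - ((p*a) powr (1/p))"
  shows "g_p p r \<ge> exp (-a-1) / (p * (a+1) * ZZ p)"
proof -
  define T where "T = (p*a) powr (1/p)"
  define X where "X = (p*(a+1)) powr (1/p)"
  have p0: "p > 0" using p by simp
  have T0: "T > 0" using p0 a by (simp add: T_def)
  have X1: "X \<ge> 1" unfolding X_def using p a by (intro ge_one_powr_ge_zero) (auto simp: mult_ge1_I)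
  hence X0: "X > 0" by simp
  have Tp: "T powr p = p*a" using p0 a by (simp add: T_def powr_powr)
  have Xp: "X powr p = p*(a+1)" using p0 a by (simp add: X_def powr_powr)
  have TX: "T \<le> X" unfolding T_def X_def using p0 a by (intro powr_mono2) auto
  have tan: "(p * X powr (p-1)) * (T - X) \<le> T powr p - X powr p"
    using T0 X0 by (intro convex_on_imp_above_tangent[where A = "{0<..}"] powr_convex[OF p])
       (auto intro!: derivative_eq_intros simp: interior_open)
  have Xpm: "X powr (p-1) = p*(a+1) / X" using X0 by (simp add: powr_diff Xp)
  have Xpm2: "X powr (p-1) \<le> p*(a+1)" unfolding Xpm using X1 p0 a
    divide_left_mono[of 1 X "p*(a+1)"] by simp
  have "p * (X powr (p-1) * (X - T)) \<ge> p" using tan Tp Xp by (simp add: algebra_simps)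
  hence A1: "X powr (p-1) * (X - T) \<ge> 1" using p0 by simp
  have "X powr (p-1) * (X - T) \<le> (p*(a+1)) * (X - T)"
    using Xpm2 TX by (intro mult_right_mono) auto
  hence XT: "(p*(a+1)) * (X - T) \<ge> 1" using A1 by linarith
  have eX: "ee p X = exp (-a-1)" using p0 X0 Xp by (simp add: ee_def)
  have "t \<in> {T<..X} \<Longrightarrow> ee p X \<le> ee p t" for t using T0 by (intro ee_mono[OF p]) auto
  hence lb: "(X - T) * exp (-a-1) \<le> (LBINT t:{T<..X}. ee p t)"
    using int_lower[OF p TX, of "ee p X"] eX by auto
  have ZT: "ZZ p - II p T \<ge> (X - T) * exp (-a-1)"
    using II_split[OF p TX] II_le_ZZ[OF p, of X] lb by linarith
  have Z0: "ZZ p > 0" by (rule ZZ_pos[OF p])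
  have IT0: "II p T > 0" by (rule II_pos[OF p])
  have "g_p p r \<ge> - ln (II p T / ZZ p)"
    using r by (intro g_ge[OF p] II_mono[OF p]) (simp add: T_def)
  moreover have "ln (II p T / ZZ p) \<le> II p T / ZZ p - 1"
    using Z0 IT0 by (intro ln_le_minus_one) simp
  moreover have "1 - II p T / ZZ p = (ZZ p - II p T) / ZZ p" using Z0 by (simp add: field_simps)
  moreover have "(ZZ p - II p T) / ZZ p \<ge> (X - T) * exp (-a-1) / ZZ p"
    using ZT Z0 by (simp add: divide_right_mono)
  moreover have "(X - T) * exp (-a-1) \<ge> exp (-a-1) / (p*(a+1))"
  proof -
    have "exp (-a-1) / (p*(a+1)) \<le> exp (-a-1) / (p*(a+1)) * ((p*(a+1)) * (X - T))"
      using mult_left_mono[OF XT, of "exp (-a-1) / (p*(a+1))"] p0 a by simp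
    also have "\<dots> = (X - T) * exp (-a-1)"
    proof -
      have "p*(a+1) > 0" using p0 a by simp
      then show ?thesis by (simp add: field_simps)
    qed
    finally show ?thesis .
  qed
  ultimately have "g_p p r \<ge> exp (-a-1) / (p*(a+1)) / ZZ p"
    using Z0 by (smt (verit, ccfv_SIG) divide_right_mono)
  then show ?thesis by (simp add: field_simps)
qed




lemma pos_bound:
  assumes p: "p \<ge> 1"
  shows "\<exists>c1>0. \<forall>r>0. g_p p r \<ge> c1 * r powr p"
proof -
  have p0: "p > 0" using p by simp
  define e2 where "e2 = (\<lambda>x::real. exp (- (\<bar>x\<bar> powr p) * (1/(2*p))))"
  have e2i: "integrable lborel e2" unfolding e2_def using full_int(1)[OF p, of "1/(2*p)"] p0 by simp
  have e2m[measurable]: "e2 \<in> borel_measurable borel" unfolding e2_def by measurable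
  define W where "W = integral\<^sup>L lborel e2"
  define Z where "Z = ZZ p"
  have Z0: "Z > 0" unfolding Z_def by (rule ZZ_pos[OF p])
  have IW: "II p (-r) \<le> exp (- (r powr p) / (2*p)) * W" if r: "r > 0" for r
  proof -
    let ?E = "exp (- (r powr p) / (2*p))"
    have si: "set_integrable lborel {..-r} (\<lambda>s. ?E * e2 s)"
      unfolding set_integrable_def
      using integrable_mult_indicator[of "{..-r}" lborel "\<lambda>s. ?E * e2 s"] e2i by simp
    have pw: "ee p s \<le> ?E * e2 s" if s: "s \<in> {..-r}" for s
    proof -
      have "r powr p \<le> \<bar>s\<bar> powr p" using s r p0 by (intro powr_mono2) auto
      hence "- (\<bar>s\<bar> powr p) / p \<le> - (r powr p) / (2*p) + - (\<bar>s\<bar> powr p) * (1/(2*p))"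
        using p0 by (simp add: field_simps)
      then show ?thesis unfolding ee_def e2_def by (simp add: exp_add[symmetric])
    qed
    have "II p (-r) \<le> (LBINT s:{..-r}. ?E * e2 s)"
      unfolding II_def by (rule set_integral_mono[OF ee_set_int[OF p] si pw]) auto
    also have "\<dots> = ?E * (LBINT s:{..-r}. e2 s)" by simp
    also have "(LBINT s:{..-r}. e2 s) \<le> W"
      unfolding set_lebesgue_integral_def W_def
    proof (rule integral_mono)
      show "integrable lborel (\<lambda>x. indicator {..-r} x *\<^sub>R e2 x)"
        by (rule integrable_mult_indicator) (auto simp: e2i)
      show "integrable lborel e2" by (rule e2i)
    qed (auto simp: indicator_def e2_def)
    hence "?E * (LBINT s:{..-r}. e2 s) \<le> ?E * W" by simp
    finally show ?thesis .
  qed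
  have W0: "W > 0"
  proof -
    have "0 < exp (- (1 powr p) / (2*p)) * W" using IW[of 1] II_pos[OF p, of "-1"] by linarith
    then show ?thesis by (simp add: zero_less_mult_iff)
  qed
  define \<gamma> where "\<gamma> = - ln (II p 0 / Z)"
  have \<gamma>0: "\<gamma> > 0"
  proof -
    have "II p 0 / Z < 1" "II p 0 / Z > 0" using II_lt_ZZ[OF p, of 0] II_pos[OF p, of 0] Z0 by (auto simp: Z_def)
    then show ?thesis unfolding \<gamma>_def by simp
  qed
  have g1: "g_p p r \<ge> \<gamma>" if "r \<ge> 0" for r
    unfolding \<gamma>_def Z_def using that by (intro g_ge[OF p] II_mono[OF p]) auto
  have g2: "g_p p r \<ge> r powr p / (2*p) - ln (W / Z)" if r: "r > 0" for r
  proof -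
    have "g_p p r \<ge> - ln (exp (- (r powr p) / (2*p)) * W / Z)"
      unfolding Z_def by (rule g_ge[OF p IW[OF r]])
    also have "ln (exp (- (r powr p) / (2*p)) * W / Z) = - (r powr p) / (2*p) + ln (W / Z)"
      using W0 Z0 by (simp add: ln_mult ln_div)
    finally show ?thesis by simp
  qed
  define B where "B = max 0 (ln (W / Z))"
  define c1 where "c1 = min (1/(4*p)) (\<gamma> / (4*p*B+1))"
  have B0: "B \<ge> 0" by (simp add: B_def)
  have c10: "c1 > 0" unfolding c1_def using p0 \<gamma>0 B0 by (simp add: add_nonneg_pos)
  have "g_p p r \<ge> c1 * r powr p" if r: "r > 0" for r
  proof (cases "r powr p \<ge> 4*p*B")
    case True
    have "c1 * r powr p \<le> (1/(4*p)) * r powr p" unfolding c1_def by (intro mult_right_mono) auto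
    also have "\<dots> \<le> r powr p / (2*p) - B" using True p0 by (simp add: field_simps)
    also have "\<dots> \<le> g_p p r" using g2[OF r] by (simp add: B_def)
    finally show ?thesis .
  next
    case False
    have "c1 * r powr p \<le> (\<gamma> / (4*p*B+1)) * r powr p" unfolding c1_def by (intro mult_right_mono) auto
    also have "\<dots> \<le> (\<gamma> / (4*p*B+1)) * (4*p*B+1)"
      using False \<gamma>0 p0 B0 by (intro mult_left_mono) auto
    also have "\<dots> = \<gamma>"
    proof -
      have "4*p*B+1 > 0" using p0 B0 by (simp add: add_nonneg_pos)
      then show ?thesis by simp
    qed
    also have "\<dots> \<le> g_p p r" using g1 r by simp
    finally show ?thesis .
  qed
  then show ?thesis using c10 by blast
qed




lemma final_arith:
  fixes \<mu> p Z c1 :: real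
  assumes mu: "\<mu> \<ge> 1" and p0: "p > 0" and Z0: "Z > 0" and c10: "c1 > 0"
  defines "L \<equiv> 1 + ln \<mu>"
  defines "C' \<equiv> min (c1 * p / 2) (exp (-3/2) / (50 * p * Z))"
  shows "C' * L / \<mu> \<le> exp (- (L/2) - 1) / (p * (L/2 + 1) * Z)"
    and "C' * L / \<mu> \<le> c1 * p * (L/2) / \<mu>"
proof -
  have L1: "L \<ge> 1" using mu by (simp add: L_def)
  have C'0: "C' \<ge> 0" using c10 p0 Z0 by (simp add: C'_def)
  show "C' * L / \<mu> \<le> c1 * p * (L/2) / \<mu>"
  proof -
    have "C' * L \<le> (c1 * p / 2) * L" using L1 by (intro mult_right_mono) (auto simp: C'_def)
    then have "C' * L / \<mu> \<le> (c1 * p / 2) * L / \<mu>" using mu by (intro divide_right_mono) auto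
    then show ?thesis by simp
  qed
  define s where "s = sqrt \<mu>"
  define u where "u = sqrt s"
  have s1: "s \<ge> 1" using mu by (simp add: s_def)
  have u1: "u \<ge> 1" using s1 by (simp add: u_def)
  have mus: "\<mu> = s * s" using mu by (simp add: s_def)
  have su: "s = u * u" using s1 by (simp add: u_def)
  have lnmu: "ln \<mu> = 4 * ln u" using u1 by (simp add: mus su ln_mult)
  have "ln u \<le> u - 1" using u1 by (intro ln_le_minus_one) simp
  hence Lu: "L \<le> 4 * u" using lnmu by (simp add: L_def)
  have LL: "L * L \<le> 16 * s"
  proof -
    have "L * L \<le> (4 * u) * (4 * u)" using Lu L1 by (intro mult_mono) auto
    then show ?thesis using su by simp
  qed
  have ex: "exp (- (L/2) - 1) = exp (-3/2) / s"
  proof -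
    have "exp (- (L/2) - 1) = exp (-3/2) * exp (- (ln \<mu> / 2))" by (simp add: L_def exp_add[symmetric] field_simps)
    also have "exp (- (ln \<mu> / 2)) = 1 / s"
    proof -
      have "sqrt \<mu> = \<mu> powr (1/2)" using mu by (simp add: powr_half_sqrt)
      also have "\<dots> = exp (ln \<mu> / 2)" using mu by (simp add: powr_def)
      finally show ?thesis by (simp add: s_def exp_minus inverse_eq_divide)
    qed
    finally show ?thesis by simp
  qed
  have "C' * L * (p * (L/2 + 1) * Z) \<le> C' * (p * Z) * (2 * (L * L))"
  proof -
    have "L \<le> L * L" using mult_right_mono[of 1 L L] L1 by simp
    moreover have "L * (L/2 + 1) = (L * L) / 2 + L" by (simp add: algebra_simps)
    ultimately have "L * (L/2 + 1) \<le> 2 * (L * L)" using L1 by linarith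
    then have "C' * (p * Z) * (L * (L/2 + 1)) \<le> C' * (p * Z) * (2 * (L * L))"
      using C'0 p0 Z0 by (intro mult_left_mono) auto
    then show ?thesis by (simp add: algebra_simps)
  qed
  also have "\<dots> \<le> C' * (p * Z) * (32 * s)" using LL C'0 p0 Z0 by (intro mult_left_mono) auto
  also have "\<dots> \<le> exp (-3/2) / (50 * p * Z) * (p * Z) * (32 * s)"
    using s1 p0 Z0 by (intro mult_right_mono) (auto simp: C'_def)
  also have "\<dots> \<le> exp (-3/2) * s" using p0 Z0 s1 by (simp add: field_simps)
  finally have key: "C' * L * (p * (L/2 + 1) * Z) \<le> exp (-3/2) * s" .
  have D0: "p * (L/2 + 1) * Z > 0" using p0 Z0 L1 by simp
  have "C' * L / \<mu> = C' * L * (p * (L/2 + 1) * Z) / (p * (L/2 + 1) * Z) / (s * s)"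
  proof -
    have "C' * L * (p * (L/2 + 1) * Z) / (p * (L/2 + 1) * Z) = C' * L"
      using D0 p0 Z0 L1 by (intro nonzero_mult_div_cancel_right) simp
    then show ?thesis by (simp add: mus)
  qed
  also have "\<dots> \<le> exp (-3/2) * s / (p * (L/2 + 1) * Z) / (s * s)"
    using key D0 s1 by (intro divide_right_mono) auto
  also have "\<dots> = exp (- (L/2) - 1) / (p * (L/2 + 1) * Z)"
  proof -
    have gen: "\<And>E D s::real. s > 0 \<Longrightarrow> D > 0 \<Longrightarrow> E * s / D / (s * s) = E / s / D"
      by (simp add: field_simps)
    show ?thesis unfolding ex using s1 D0 by (intro gen) auto
  qed
  finally show "C' * L / \<mu> \<le> exp (- (L/2) - 1) / (p * (L/2 + 1) * Z)" .
qed




lemma rowdot_neg: "rowdot X d (\<lambda>j. - \<beta> j) i = - rowdot X d \<beta> i"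
  by (simp add: rowdot_def sum_negf)

lemma ratio_bound:
  assumes mc: "mu_complex p X n d \<mu>" and bj: "\<exists>j<d. \<beta> j \<noteq> 0"
  shows "(\<Sum>i\<in>{i. i < n \<and> rowdot X d \<beta> i < 0}. \<bar>rowdot X d \<beta> i\<bar> powr p) \<noteq> 0 \<and>
         (\<Sum>i\<in>{i. i < n \<and> rowdot X d \<beta> i > 0}. \<bar>rowdot X d \<beta> i\<bar> powr p) /
         (\<Sum>i\<in>{i. i < n \<and> rowdot X d \<beta> i < 0}. \<bar>rowdot X d \<beta> i\<bar> powr p) \<le> \<mu>"
proof -
  have "mu_ratio p X n d \<beta> \<le> mu_p p X n d" unfolding mu_p_def
    by (rule SUP_upper) (use bj in auto)
  also have "\<dots> \<le> ereal \<mu>" using mc by (simp add: mu_complex_def)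
  finally show ?thesis unfolding mu_ratio_def Let_def by (auto split: if_splits)
qed

lemma sum_pos_nonzero:
  assumes "finite A" "(\<Sum>i\<in>A. f i) \<noteq> (0::real)" "\<And>i. i \<in> A \<Longrightarrow> f i \<ge> 0"
  shows "(\<Sum>i\<in>A. f i) > 0"
proof -
  have "(\<Sum>i\<in>A. f i) \<ge> 0" using assms(3) by (rule sum_nonneg)
  then show ?thesis using assms(2) by linarith
qed

lemma mu_ge1: assumes d: "d > 0" and mc: "mu_complex p X n d \<mu>" shows "\<mu> \<ge> 1"
proof -
  define b where "b = (\<lambda>j::nat. (1::real))"
  define P where "P = (\<Sum>i\<in>{i. i < n \<and> rowdot X d b i > 0}. \<bar>rowdot X d b i\<bar> powr p)"
  define N where "N = (\<Sum>i\<in>{i. i < n \<and> rowdot X d b i < 0}. \<bar>rowdot X d b i\<bar> powr p)"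
  have b1: "\<exists>j<d. b j \<noteq> 0" using d by (auto simp: b_def)
  have b2: "\<exists>j<d. - b j \<noteq> 0" using d by (auto simp: b_def)
  have r1: "N \<noteq> 0 \<and> P / N \<le> \<mu>" using ratio_bound[OF mc b1] by (simp add: P_def N_def)
  have r2': "P \<noteq> 0 \<and> N / P \<le> \<mu>" using ratio_bound[OF mc b2]
    by (simp add: P_def N_def rowdot_neg)
  have N0: "N > 0" unfolding N_def by (rule sum_pos_nonzero) (use r1 in \<open>auto simp: N_def\<close>)
  have P0: "P > 0" unfolding P_def by (rule sum_pos_nonzero) (use r2' in \<open>auto simp: P_def\<close>)
  show ?thesis
  proof (rule ccontr)
    assume "\<not> \<mu> \<ge> 1"
    hence "P < N" "N < P" using r1 r2' N0 P0 by (auto simp: divide_le_eq) (smt (verit) mult_le_cancel_left1 mult.commute)+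
    then show False by simp
  qed
qed




lemma filt_sum:
  fixes n :: nat and f :: "nat \<Rightarrow> real"
  shows "(\<Sum>i\<in>{i. i < n \<and> P i}. f i) = (\<Sum>i<n. if P i then f i else (0::real))"
proof -
  have "{i. i < n \<and> P i} = {i \<in> {..<n}. P i}" by auto
  moreover have "finite {..<n}" by simp
  ultimately show ?thesis using sum.inter_filter[of "{..<n}" f P] by simp
qed

lemma neg_le:
  assumes d: "d > 0" and mc: "mu_complex p X n d \<mu>"
  shows "(\<Sum>i\<in>{i. i < n \<and> rowdot X d \<beta> i < 0}. \<bar>rowdot X d \<beta> i\<bar> powr p)
         \<le> \<mu> * (\<Sum>i\<in>{i. i < n \<and> rowdot X d \<beta> i > 0}. \<bar>rowdot X d \<beta> i\<bar> powr p)"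
    (is "?N \<le> \<mu> * ?P")
proof (cases "\<exists>j<d. \<beta> j \<noteq> 0")
  case False
  hence "rowdot X d \<beta> i = 0" for i by (auto simp: rowdot_def)
  hence "?N = 0" "?P = 0" by auto
  then show ?thesis by simp
next
  case True
  hence b2: "\<exists>j<d. - \<beta> j \<noteq> 0" by auto
  have r: "?P \<noteq> 0 \<and> ?N / ?P \<le> \<mu>" using ratio_bound[OF mc b2] by (simp add: rowdot_neg)
  have P0: "?P > 0" by (rule sum_pos_nonzero) (use r in auto)
  then show ?thesis using r by (simp add: divide_le_eq mult.commute)
qed

theorem lemma3:
  fixes p :: real
  assumes "p \<ge> 1"
  shows "\<exists>C>0. \<forall>(n::nat) (d::nat) (X::nat \<Rightarrow> nat \<Rightarrow> real) (\<mu>::real) (\<beta>::nat \<Rightarrow> real).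
           0 < d \<longrightarrow> mu_complex p X n d \<mu> \<longrightarrow>
           f_p p X n d \<beta> \<ge> C * (real n / \<mu>) * (1 + ln \<mu>)"
proof -
  have p: "p \<ge> 1" by (rule assms)
  have p0: "p > 0" using p by simp
  obtain c1 where c10: "c1 > 0" and hc1: "\<And>r. r > 0 \<Longrightarrow> g_p p r \<ge> c1 * r powr p"
    using pos_bound[OF p] by blast
  define Z where "Z = ZZ p"
  have Z0: "Z > 0" unfolding Z_def by (rule ZZ_pos[OF p])
  define C' where "C' = min (c1 * p / 2) (exp (-3/2) / (50 * p * Z))"
  have C'0: "C' > 0" using c10 p0 Z0 by (simp add: C'_def)
  have main: "f_p p X n d \<beta> \<ge> (C'/2) * (real n / \<mu>) * (1 + ln \<mu>)"
    if d: "0 < d" and mc: "mu_complex p X n d \<mu>" for n d X \<mu> \<beta>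
  proof -
    have mu: "\<mu> \<ge> 1" by (rule mu_ge1[OF d mc])
    define L where "L = 1 + ln \<mu>"
    have L1: "L \<ge> 1" using mu by (simp add: L_def)
    define a where "a = L / 2"
    have a0: "a > 0" using L1 by (simp add: a_def)
    define t where "t = (p * a) powr (1/p)"
    have t0: "t > 0" using p0 a0 by (simp add: t_def)
    have tp: "t powr p = p * a" using p0 a0 by (simp add: t_def powr_powr)
    define \<tau> where "\<tau> = exp (-a-1) / (p * (a+1) * Z)"
    have \<tau>0: "\<tau> > 0" using p0 a0 Z0 by (simp add: \<tau>_def)
    define m0 where "m0 = min \<tau> (c1 * p * a / \<mu>)"
    define pos where "pos = (\<lambda>x::real. if x > 0 then \<bar>x\<bar> powr p else 0)"
    define neg where "neg = (\<lambda>x::real. if x < 0 then \<bar>x\<bar> powr p else 0)"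
    define ind where "ind = (\<lambda>x::real. if x \<ge> -t then 1 else (0::real))"
    have R1: "\<tau> * ind x + c1 * pos x \<le> 2 * g_p p x" for x
    proof -
      have gt: "g_p p x \<ge> \<tau>" if "x \<ge> -t"
        using tail_bound[OF p a0, of x] that by (simp add: \<tau>_def Z_def t_def)
      have g0: "g_p p x \<ge> 0" by (rule g_nonneg[OF p])
      show ?thesis
      proof (cases "x > 0")
        case True
        then show ?thesis using gt hc1[OF True] t0 by (simp add: ind_def pos_def)
      next
        case False
        then show ?thesis using gt g0 by (auto simp: ind_def pos_def)
      qed
    qed
    have R2: "m0 \<le> \<tau> * ind x + (c1 / \<mu>) * neg x" for x
    proof (cases "x \<ge> -t")
      case True
      have "neg x \<ge> 0" by (simp add: neg_def)
      then have "0 \<le> (c1 / \<mu>) * neg x" using c10 mu by simp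
      then show ?thesis using True by (simp add: ind_def m0_def)
    next
      case False
      have "t powr p \<le> \<bar>x\<bar> powr p" using False t0 p0 by (intro powr_mono2) auto
      hence "p * a \<le> neg x" using False t0 by (simp add: neg_def tp)
      hence "(c1 / \<mu>) * (p * a) \<le> (c1 / \<mu>) * neg x" using c10 mu by (intro mult_left_mono) auto
      then show ?thesis using False by (simp add: ind_def m0_def)
    qed
    define r where "r = (\<lambda>i. rowdot X d \<beta> i)"
    have SN: "(\<Sum>i\<in>{i. i < n \<and> rowdot X d \<beta> i < 0}. \<bar>rowdot X d \<beta> i\<bar> powr p) = (\<Sum>i<n. neg (r i))"
      unfolding filt_sum neg_def r_def by (rule refl)
    have SP: "(\<Sum>i\<in>{i. i < n \<and> rowdot X d \<beta> i > 0}. \<bar>rowdot X d \<beta> i\<bar> powr p) = (\<Sum>i<n. pos (r i))"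
      unfolding filt_sum pos_def r_def by (rule refl)
    have NP: "(\<Sum>i<n. neg (r i)) \<le> \<mu> * (\<Sum>i<n. pos (r i))"
      using neg_le[OF d mc, of \<beta>] SN SP by simp
    have "real n * m0 = (\<Sum>i<n. m0)" by simp
    also have "\<dots> \<le> (\<Sum>i<n. \<tau> * ind (r i) + (c1 / \<mu>) * neg (r i))" by (rule sum_mono) (rule R2)
    also have "\<dots> = \<tau> * (\<Sum>i<n. ind (r i)) + (c1 / \<mu>) * (\<Sum>i<n. neg (r i))"
      by (simp add: sum.distrib sum_distrib_left)
    also have "(c1 / \<mu>) * (\<Sum>i<n. neg (r i)) \<le> c1 * (\<Sum>i<n. pos (r i))"
    proof -
      have "(c1 / \<mu>) * (\<Sum>i<n. neg (r i)) \<le> (c1 / \<mu>) * (\<mu> * (\<Sum>i<n. pos (r i)))"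
        using NP c10 mu by (intro mult_left_mono) auto
      then show ?thesis using mu by simp
    qed
    also have "\<tau> * (\<Sum>i<n. ind (r i)) + c1 * (\<Sum>i<n. pos (r i)) = (\<Sum>i<n. \<tau> * ind (r i) + c1 * pos (r i))"
      by (simp add: sum.distrib sum_distrib_left)
    also have "\<dots> \<le> (\<Sum>i<n. 2 * g_p p (r i))" by (rule sum_mono) (rule R1)
    also have "\<dots> = 2 * f_p p X n d \<beta>" by (simp add: f_p_def r_def sum_distrib_left)
    finally have fm: "real n * m0 \<le> 2 * f_p p X n d \<beta>" by simp
    have fa1: "C' * L / \<mu> \<le> \<tau>" using final_arith(1)[OF mu p0 Z0 c10] by (simp add: \<tau>_def a_def L_def C'_def)
    have fa2: "C' * L / \<mu> \<le> c1 * p * a / \<mu>" using final_arith(2)[OF mu p0 Z0 c10] by (simp add: a_def L_def C'_def)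
    have "C' * L / \<mu> \<le> m0" using fa1 fa2 by (simp add: m0_def)
    hence "real n * (C' * L / \<mu>) \<le> real n * m0" by (intro mult_left_mono) auto
    hence "real n * (C' * L / \<mu>) \<le> 2 * f_p p X n d \<beta>" using fm by linarith
    moreover have "(C'/2) * (real n / \<mu>) * L = real n * (C' * L / \<mu>) / 2" using mu by (simp add: field_simps)
    ultimately have "(C'/2) * (real n / \<mu>) * L \<le> f_p p X n d \<beta>"
      by (metis (no_types, lifting) field_sum_of_halves mult_2 add_le_cancel_left divide_right_mono zero_le_numeral
          nonzero_mult_div_cancel_left zero_neq_numeral)
    then show ?thesis by (simp add: L_def)
  qed
  show ?thesis
    by (rule exI[of _ "C'/2"]) (use C'0 main in auto)
qed

end
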